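(* Let $\lambda$ be a positive integer, $k\neq 0$, $\psi_0\in\mathbb{R}$, $F(\psi)=\frac{k}{\sin^2(\lambda\psi+\psi_0)}$, $G(\psi)=\cos(\lambda\psi+\psi_0)$, and $I_\lambda=\left(p_r+\frac{1}{\lambda r}\mathcal{X}_L\right)^\lambda G(\psi)$. Then the three functions $H=\frac12p_r^2+\frac{1}{r^2}L$, $L=\frac12p_\psi^2+F(\psi)$ and $I_\lambda$ are functionally independent on $(r,\psi,p_r,p_\psi)$-phase space (their differentials are linearly independent outside a closed nowhere dense set). Consequently, on the phase space with coordinates $(r,\psi,z,p_r,p_\psi,p_z)$, the five functions $$H_0=\frac12\left(p_r^2+\frac{1}{r^2}p_\psi^2+p_z^2\right)+\frac{F(\psi)}{r^2},\quad H_1=\frac12p_z^2,\quad H_2=\frac12p_\psi^2+F(\psi),$$ $$H_3=\frac12\left[(rp_z-zp_r)^2+\left(1+\frac{z^2}{r^2}\right)p_\psi^2\right]+\left(1+\frac{z^2}{r^2}\right)F(\psi),$$ and $I_\lambda$ are functionally independent, so the Hamiltonian $H_0$ is maximally superintegrable.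
   Context: $(r,\psi,z)$ are cylindrical coordinates in Euclidean 3-space with $r>0$, and $(p_r,p_\psi,p_z)$ the conjugate momenta with canonical Poisson bracket; dots denote derivatives in $\psi$. $\mathcal{X}_L=p_\psi\frac{\partial}{\partial\psi}-\dot F\frac{\partial}{\partial p_\psi}$ is the Hamiltonian vector field of $L$, viewed as a differential operator; $p_r$ and $1/(\lambda r)$ act by multiplication, and the power means applying the operator $\lambda$ times to $G$. Each of $H_0,\dots,H_3,I_\lambda$ Poisson-commutes with $H_0$. *)

theory Defs
  imports "HOL-Analysis.Analysis"
begin

definition Fpot :: "nat \<Rightarrow> real \<Rightarrow> real \<Rightarrow> real \<Rightarrow> real" where
  "Fpot lam k psi0 \<psi> = k / (sin (real lam * \<psi> + psi0))\<^sup>2"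

definition Gfun :: "nat \<Rightarrow> real \<Rightarrow> real \<Rightarrow> real" where
  "Gfun lam psi0 \<psi> = cos (real lam * \<psi> + psi0)"

text \<open>Functions on the reduced phase space, in curried form f r psi p_r p_psi.
  The Hamiltonian vector field of L = p_psi^2/2 + F(psi) as a differential operator:
  X_L = p_psi d/dpsi - F'(psi) d/dp_psi.\<close>
definition XL :: "(real \<Rightarrow> real) \<Rightarrow> (real \<Rightarrow> real \<Rightarrow> real \<Rightarrow> real \<Rightarrow> real)
                  \<Rightarrow> (real \<Rightarrow> real \<Rightarrow> real \<Rightarrow> real \<Rightarrow> real)" where
  "XL F f = (\<lambda>r \<psi> pr pp. pp * deriv (\<lambda>t. f r t pr pp) \<psi> - deriv F \<psi> * deriv (\<lambda>t. f r \<psi> pr t) pp)"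

definition Iop :: "nat \<Rightarrow> (real \<Rightarrow> real) \<Rightarrow> (real \<Rightarrow> real \<Rightarrow> real \<Rightarrow> real \<Rightarrow> real)
                  \<Rightarrow> (real \<Rightarrow> real \<Rightarrow> real \<Rightarrow> real \<Rightarrow> real)" where
  "Iop lam F f = (\<lambda>r \<psi> pr pp. pr * f r \<psi> pr pp + 1 / (real lam * r) * XL F f r \<psi> pr pp)"

definition Ilam :: "nat \<Rightarrow> real \<Rightarrow> real \<Rightarrow> real \<Rightarrow> real \<Rightarrow> real \<Rightarrow> real \<Rightarrow> real" where
  "Ilam lam k psi0 = (Iop lam (Fpot lam k psi0) ^^ lam) (\<lambda>r \<psi> pr pp. Gfun lam psi0 \<psi>)"

definition indep_differentials_at :: "('a::real_normed_vector \<Rightarrow> real) list \<Rightarrow> 'a \<Rightarrow> bool" where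
  "indep_differentials_at fs x \<longleftrightarrow>
     (\<forall>f\<in>set fs. f differentiable (at x)) \<and>
     (\<forall>c::nat \<Rightarrow> real.
        (\<forall>v. (\<Sum>i<length fs. c i * frechet_derivative (fs ! i) (at x) v) = 0)
        \<longrightarrow> (\<forall>i<length fs. c i = 0))"

definition functionally_independent :: "('a::real_normed_vector \<Rightarrow> real) list \<Rightarrow> 'a set \<Rightarrow> bool" where
  "functionally_independent fs D \<longleftrightarrow>
     (\<exists>S. S \<subseteq> D \<and> closedin (top_of_set D) S \<and> interior S = {} \<and>
          (\<forall>x\<in>D - S. indep_differentials_at fs x))"

end

theory Submission
  imports Defs "HOL-Computational_Algebra.Polynomial"
begin

inductive_set KK :: "nat \<Rightarrow> real \<Rightarrow> (real \<times> real \<Rightarrow> real) set" for lam :: nat and psi0 :: real where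
  kconst: "(\<lambda>_. c) \<in> KK lam psi0"
| ksnd: "snd \<in> KK lam psi0"
| kcos: "(\<lambda>x. cos (real lam * fst x + psi0)) \<in> KK lam psi0"
| ksin: "(\<lambda>x. sin (real lam * fst x + psi0)) \<in> KK lam psi0"
| kinv: "(\<lambda>x. inverse (sin (real lam * fst x + psi0))) \<in> KK lam psi0"
| kadd: "f \<in> KK lam psi0 \<Longrightarrow> g \<in> KK lam psi0 \<Longrightarrow> (\<lambda>x. f x + g x) \<in> KK lam psi0"
| kmult: "f \<in> KK lam psi0 \<Longrightarrow> g \<in> KK lam psi0 \<Longrightarrow> (\<lambda>x. f x * g x) \<in> KK lam psi0"

lemma KK_deriv:
  assumes "f \<in> KK lam psi0"
  shows "\<exists>f1\<in>KK lam psi0. \<exists>f2\<in>KK lam psi0. \<forall>x. sin (real lam * fst x + psi0) \<noteq> 0 \<longrightarrow>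
           (f has_derivative (\<lambda>h. f1 x * fst h + f2 x * snd h)) (at x)"
  using assms
proof induction
  case (kconst c)
  show ?case
    by (rule bexI[of _ "\<lambda>_. 0"], rule bexI[of _ "\<lambda>_. 0"]) (auto intro: KK.kconst)
next
  case ksnd
  show ?case
    apply (rule bexI[of _ "\<lambda>_. 0"], rule bexI[of _ "\<lambda>_. 1"])
    apply (auto intro: KK.kconst)
    using has_derivative_snd[of "\<lambda>x. x" "\<lambda>x. x" "at _"] by (simp add: has_derivative_ident)
next
  case kcos
  have m: "(\<lambda>x. (\<lambda>_. - real lam) x * (\<lambda>x. sin (real lam * fst x + psi0)) x) \<in> KK lam psi0"
    by (intro KK.kmult KK.kconst KK.ksin)
  show ?case
  proof (rule bexI[OF _ m], rule bexI[of _ "\<lambda>_. 0"], intro allI impI)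
    fix x :: "real \<times> real"
    have "((\<lambda>x. cos (real lam * fst x + psi0)) has_derivative (\<lambda>h. real lam * fst h * (- sin (real lam * fst x + psi0)))) (at x)"
      by (rule DERIV_compose_FDERIV[where f=cos]) (auto intro!: derivative_eq_intros)
    then show "((\<lambda>x. cos (real lam * fst x + psi0)) has_derivative
          (\<lambda>h. (- real lam) * sin (real lam * fst x + psi0) * fst h + 0 * snd h)) (at x)"
      by (rule has_derivative_eq_rhs) (auto simp: fun_eq_iff algebra_simps)
  qed (auto intro: KK.kconst)
next
  case ksin
  have m: "(\<lambda>x. (\<lambda>_. real lam) x * (\<lambda>x. cos (real lam * fst x + psi0)) x) \<in> KK lam psi0"
    by (intro KK.kmult KK.kconst KK.kcos)
  show ?case
  proof (rule bexI[OF _ m], rule bexI[of _ "\<lambda>_. 0"], intro allI impI)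
    fix x :: "real \<times> real"
    have "((\<lambda>x. sin (real lam * fst x + psi0)) has_derivative (\<lambda>h. real lam * fst h * (cos (real lam * fst x + psi0)))) (at x)"
      by (rule DERIV_compose_FDERIV[where f=sin]) (auto intro!: derivative_eq_intros)
    then show "((\<lambda>x. sin (real lam * fst x + psi0)) has_derivative
          (\<lambda>h. real lam * cos (real lam * fst x + psi0) * fst h + 0 * snd h)) (at x)"
      by (rule has_derivative_eq_rhs) (auto simp: fun_eq_iff algebra_simps)
  qed (auto intro: KK.kconst)
next
  case kinv
  let ?i = "\<lambda>x. inverse (sin (real lam * fst x + psi0))"
  have m: "(\<lambda>x. (\<lambda>x. (\<lambda>_. - real lam) x * (\<lambda>x. cos (real lam * fst x + psi0)) x) x * (\<lambda>x. ?i x * ?i x) x) \<in> KK lam psi0"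
    by (intro KK.kmult KK.kconst KK.kcos KK.kinv)
  show ?case
  proof (rule bexI[OF _ m], rule bexI[of _ "\<lambda>_. 0"], intro allI impI)
    fix x :: "real \<times> real"
    assume s: "sin (real lam * fst x + psi0) \<noteq> 0"
    have "((\<lambda>x. inverse (sin (real lam * fst x + psi0))) has_derivative (\<lambda>h. real lam * fst h * (- (cos (real lam * fst x + psi0) / (sin (real lam * fst x + psi0))^2)))) (at x)"
      by (rule DERIV_compose_FDERIV[where f="\<lambda>t. inverse (sin t)"]) (use s in \<open>auto intro!: derivative_eq_intros simp: power2_eq_square field_simps\<close>)
    then show "(?i has_derivative
          (\<lambda>h. (- real lam) * cos (real lam * fst x + psi0) * (?i x * ?i x) * fst h + 0 * snd h)) (at x)"
      by (rule has_derivative_eq_rhs) (auto simp: fun_eq_iff algebra_simps power2_eq_square divide_inverse)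
  qed (auto intro: KK.kconst)
next
  case (kadd f g)
  from kadd.IH obtain f1 f2 g1 g2 where
    F: "f1 \<in> KK lam psi0" "f2 \<in> KK lam psi0" "\<forall>x. sin (real lam * fst x + psi0) \<noteq> 0 \<longrightarrow> (f has_derivative (\<lambda>h. f1 x * fst h + f2 x * snd h)) (at x)"
    and G: "g1 \<in> KK lam psi0" "g2 \<in> KK lam psi0" "\<forall>x. sin (real lam * fst x + psi0) \<noteq> 0 \<longrightarrow> (g has_derivative (\<lambda>h. g1 x * fst h + g2 x * snd h)) (at x)"
    by blast
  show ?case
  proof (rule bexI[of _ "\<lambda>x. f1 x + g1 x"], rule bexI[of _ "\<lambda>x. f2 x + g2 x"], intro allI impI)
    fix x :: "real \<times> real"
    assume s: "sin (real lam * fst x + psi0) \<noteq> 0"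
    show "((\<lambda>x. f x + g x) has_derivative (\<lambda>h. (f1 x + g1 x) * fst h + (f2 x + g2 x) * snd h)) (at x)"
      using has_derivative_add[OF F(3)[rule_format, OF s] G(3)[rule_format, OF s]]
      by (rule has_derivative_eq_rhs) (auto simp: fun_eq_iff algebra_simps)
  qed (use F G in \<open>auto intro: KK.kadd\<close>)
next
  case (kmult f g)
  from kmult.IH obtain f1 f2 g1 g2 where
    F: "f1 \<in> KK lam psi0" "f2 \<in> KK lam psi0" "\<forall>x. sin (real lam * fst x + psi0) \<noteq> 0 \<longrightarrow> (f has_derivative (\<lambda>h. f1 x * fst h + f2 x * snd h)) (at x)"
    and G: "g1 \<in> KK lam psi0" "g2 \<in> KK lam psi0" "\<forall>x. sin (real lam * fst x + psi0) \<noteq> 0 \<longrightarrow> (g has_derivative (\<lambda>h. g1 x * fst h + g2 x * snd h)) (at x)"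
    by blast
  show ?case
  proof (rule bexI[of _ "\<lambda>x. f1 x * g x + f x * g1 x"], rule bexI[of _ "\<lambda>x. f2 x * g x + f x * g2 x"], intro allI impI)
    fix x :: "real \<times> real"
    assume s: "sin (real lam * fst x + psi0) \<noteq> 0"
    show "((\<lambda>x. f x * g x) has_derivative (\<lambda>h. (f1 x * g x + f x * g1 x) * fst h + (f2 x * g x + f x * g2 x) * snd h)) (at x)"
      using has_derivative_mult[OF F(3)[rule_format, OF s] G(3)[rule_format, OF s]]
      by (rule has_derivative_eq_rhs) (auto simp: fun_eq_iff algebra_simps)
  qed (use F G kmult in \<open>auto intro!: KK.kadd KK.kmult\<close>)
qed

lemma KK_partials:
  assumes "g \<in> KK lam psi0"
  shows "\<exists>g1\<in>KK lam psi0. \<exists>g2\<in>KK lam psi0. \<forall>psi pp. sin (real lam * psi + psi0) \<noteq> 0 \<longrightarrow>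
     ((\<lambda>t. g (t, pp)) has_real_derivative g1 (psi, pp)) (at psi) \<and>
     ((\<lambda>t. g (psi, t)) has_real_derivative g2 (psi, pp)) (at pp)"
proof -
  obtain g1 g2 where G: "g1 \<in> KK lam psi0" "g2 \<in> KK lam psi0"
    "\<forall>x. sin (real lam * fst x + psi0) \<noteq> 0 \<longrightarrow> (g has_derivative (\<lambda>h. g1 x * fst h + g2 x * snd h)) (at x)"
    using KK_deriv[OF assms(1)] by blast
  show ?thesis
  proof (rule bexI[OF _ G(1)], rule bexI[OF _ G(2)], intro allI conjI impI)
    fix psi pp
    assume s: "sin (real lam * psi + psi0) \<noteq> 0"
    have D: "(g has_derivative (\<lambda>h. g1 (psi,pp) * fst h + g2 (psi,pp) * snd h)) (at (psi,pp))"
      using G(3) s by auto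
    have "((\<lambda>t. g (t, pp)) has_derivative (\<lambda>h. g1 (psi,pp) * fst (h,0::real) + g2 (psi,pp) * snd (h,0::real))) (at psi)"
      by (rule has_derivative_compose[where f="\<lambda>t. (t,pp)", OF _ D[simplified]]) (auto intro!: derivative_eq_intros)
    then show "((\<lambda>t. g (t, pp)) has_real_derivative g1 (psi, pp)) (at psi)"
      by (simp add: has_field_derivative_def mult_commute_abs)
    have "((\<lambda>t. g (psi, t)) has_derivative (\<lambda>h. g1 (psi,pp) * fst (0::real,h) + g2 (psi,pp) * snd (0::real,h))) (at pp)"
      by (rule has_derivative_compose[where f="\<lambda>t. (psi,t)", OF _ D[simplified]]) (auto intro!: derivative_eq_intros)
    then show "((\<lambda>t. g (psi, t)) has_real_derivative g2 (psi, pp)) (at pp)"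
      by (simp add: has_field_derivative_def mult_commute_abs)
  qed
qed

lemma XL_at:
  assumes "((\<lambda>t. f r t pr pp) has_real_derivative d1) (at psi)"
      and "((\<lambda>t. f r psi pr t) has_real_derivative d2) (at pp)"
  shows "XL F f r psi pr pp = pp * d1 - deriv F psi * d2"
  using assms by (simp add: XL_def DERIV_imp_deriv)

definition hh :: "nat \<Rightarrow> real \<Rightarrow> real \<Rightarrow> nat \<Rightarrow> real \<Rightarrow> real \<Rightarrow> real \<Rightarrow> real \<Rightarrow> real" where
  "hh lam k psi0 j = (XL (Fpot lam k psi0) ^^ j) (\<lambda>r \<psi> pr pp. Gfun lam psi0 \<psi>)"

definition Fk :: "nat \<Rightarrow> real \<Rightarrow> real \<Rightarrow> real \<times> real \<Rightarrow> real" where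
  "Fk lam k psi0 = (\<lambda>x. (\<lambda>_. k) x * (\<lambda>x. inverse (sin (real lam * fst x + psi0)) * inverse (sin (real lam * fst x + psi0))) x)"

lemma Fk_KK: "Fk lam k psi0 \<in> KK lam psi0"
  unfolding Fk_def by (intro KK.kmult KK.kconst KK.kinv)

lemma Fpot_Fk: "Fpot lam k psi0 t = Fk lam k psi0 (t, pp)"
  by (simp add: Fpot_def Fk_def power2_eq_square divide_inverse)

lemma deriv_F:
  "\<exists>F1\<in>KK lam psi0. \<forall>psi pp. sin (real lam * psi + psi0) \<noteq> 0 \<longrightarrow> deriv (Fpot lam k psi0) psi = F1 (psi, pp)"
proof -
  obtain F1 where F1: "F1 \<in> KK lam psi0" "\<forall>psi pp. sin (real lam * psi + psi0) \<noteq> 0 \<longrightarrow> ((\<lambda>t. Fk lam k psi0 (t, pp)) has_real_derivative F1 (psi, pp)) (at psi)"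
    using KK_partials[OF Fk_KK] by blast
  have e: "(\<lambda>t. Fk lam k psi0 (t, pp)) = Fpot lam k psi0" for pp
    by (simp add: Fpot_def Fk_def power2_eq_square divide_inverse fun_eq_iff)
  show ?thesis using F1 e by (metis DERIV_imp_deriv)
qed

lemma hh_K:
  "\<exists>g\<in>KK lam psi0. \<forall>r psi pr pp. sin (real lam * psi + psi0) \<noteq> 0 \<longrightarrow> hh lam k psi0 j r psi pr pp = g (psi, pp)"
proof (induction j)
  case 0
  show ?case
    by (rule bexI[OF _ KK.kcos]) (simp add: hh_def Gfun_def)
next
  case (Suc j)
  then obtain g where g: "g \<in> KK lam psi0"
    "\<forall>r psi pr pp. sin (real lam * psi + psi0) \<noteq> 0 \<longrightarrow> hh lam k psi0 j r psi pr pp = g (psi, pp)" by blast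
  obtain g1 g2 where G: "g1 \<in> KK lam psi0" "g2 \<in> KK lam psi0"
    "\<forall>psi pp. sin (real lam * psi + psi0) \<noteq> 0 \<longrightarrow>
     ((\<lambda>t. g (t, pp)) has_real_derivative g1 (psi, pp)) (at psi) \<and>
     ((\<lambda>t. g (psi, t)) has_real_derivative g2 (psi, pp)) (at pp)"
    using KK_partials[OF g(1)] by blast
  obtain F1 where F1: "F1 \<in> KK lam psi0" "\<forall>psi pp. sin (real lam * psi + psi0) \<noteq> 0 \<longrightarrow> deriv (Fpot lam k psi0) psi = F1 (psi, pp)"
    using deriv_F by blast
  have mem: "(\<lambda>x. (\<lambda>x. snd x * g1 x) x + (\<lambda>x. ((\<lambda>_. -1) x * F1 x) * g2 x) x) \<in> KK lam psi0"
    by (intro KK.kadd KK.kmult KK.ksnd KK.kconst G F1)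
  show ?case
  proof (rule bexI[OF _ mem], intro allI impI)
    fix r psi pr pp
    assume s: "sin (real lam * psi + psi0) \<noteq> 0"
    have op: "open {t. sin (real lam * t + psi0) \<noteq> 0}"
      by (rule open_Collect_neq) (auto intro!: continuous_intros)
    have d1: "((\<lambda>t. hh lam k psi0 j r t pr pp) has_real_derivative g1 (psi, pp)) (at psi)"
      by (rule has_field_derivative_transform_within_open[OF _ op]) (use G(3) s g(2) in auto)
    have e2: "(\<lambda>t. hh lam k psi0 j r psi pr t) = (\<lambda>t. g (psi, t))"
      using g(2) s by auto
    have d2: "((\<lambda>t. hh lam k psi0 j r psi pr t) has_real_derivative g2 (psi, pp)) (at pp)"
      unfolding e2 using G(3) s by auto
    have "hh lam k psi0 (Suc j) r psi pr pp = XL (Fpot lam k psi0) (hh lam k psi0 j) r psi pr pp"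
      by (simp add: hh_def)
    also have "\<dots> = pp * g1 (psi, pp) - deriv (Fpot lam k psi0) psi * g2 (psi, pp)"
      by (rule XL_at[where f="hh lam k psi0 j", OF d1 d2])
    finally show "hh lam k psi0 (Suc j) r psi pr pp = snd (psi, pp) * g1 (psi, pp) + - 1 * F1 (psi, pp) * g2 (psi, pp)"
      using F1(2) s by simp
  qed
qed

lemma pascal:
  fixes pr a :: real and h :: "nat \<Rightarrow> real"
  shows "pr * (\<Sum>j\<le>n. real (n choose j) * pr^(n-j) * a^j * h j)
       + a * (\<Sum>j\<le>n. real (n choose j) * pr^(n-j) * a^j * h (Suc j))
       = (\<Sum>j\<le>Suc n. real (Suc n choose j) * pr^(Suc n-j) * a^j * h j)"
proof -
  have A: "pr * (\<Sum>j\<le>n. real (n choose j) * pr^(n-j) * a^j * h j)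
      = (\<Sum>j\<le>Suc n. real (n choose j) * pr^(Suc n-j) * a^j * h j)"
    by (simp add: sum_distrib_left Suc_diff_le algebra_simps)
  also have "\<dots> = pr^(Suc n) * h 0 + (\<Sum>j\<le>n. real (n choose Suc j) * pr^(n-j) * a^(Suc j) * h (Suc j))"
    by (subst sum.atMost_Suc_shift) simp
  finally have A': "pr * (\<Sum>j\<le>n. real (n choose j) * pr^(n-j) * a^j * h j) = \<dots>" .
  have B: "a * (\<Sum>j\<le>n. real (n choose j) * pr^(n-j) * a^j * h (Suc j))
     = (\<Sum>j\<le>n. real (n choose j) * pr^(n-j) * a^(Suc j) * h (Suc j))"
    by (simp add: sum_distrib_left algebra_simps)
  have C: "(\<Sum>j\<le>Suc n. real (Suc n choose j) * pr^(Suc n-j) * a^j * h j)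
     = pr^(Suc n) * h 0 + (\<Sum>j\<le>n. (real (n choose j) + real (n choose Suc j)) * pr^(n-j) * a^(Suc j) * h (Suc j))"
    by (subst sum.atMost_Suc_shift) simp
  show ?thesis
    unfolding A' B C by (simp add: sum.distrib algebra_simps)
qed

lemma hh_D:
  assumes "sin (real lam * psi + psi0) \<noteq> 0"
  shows "\<exists>d1 d2. ((\<lambda>t. hh lam k psi0 j r t pr pp) has_real_derivative d1) (at psi) \<and>
                 ((\<lambda>t. hh lam k psi0 j r psi pr t) has_real_derivative d2) (at pp)"
proof -
  obtain g where g: "g \<in> KK lam psi0"
    "\<forall>r psi pr pp. sin (real lam * psi + psi0) \<noteq> 0 \<longrightarrow> hh lam k psi0 j r psi pr pp = g (psi, pp)"
    using hh_K by blast
  obtain g1 g2 where G: "\<forall>psi pp. sin (real lam * psi + psi0) \<noteq> 0 \<longrightarrow>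
     ((\<lambda>t. g (t, pp)) has_real_derivative g1 (psi, pp)) (at psi) \<and>
     ((\<lambda>t. g (psi, t)) has_real_derivative g2 (psi, pp)) (at pp)"
    using KK_partials[OF g(1)] by blast
  have op: "open {t. sin (real lam * t + psi0) \<noteq> 0}"
    by (rule open_Collect_neq) (auto intro!: continuous_intros)
  have d1: "((\<lambda>t. hh lam k psi0 j r t pr pp) has_real_derivative g1 (psi, pp)) (at psi)"
    by (rule has_field_derivative_transform_within_open[OF _ op]) (use G assms g(2) in auto)
  have e2: "(\<lambda>t. hh lam k psi0 j r psi pr t) = (\<lambda>t. g (psi, t))"
    using g(2) assms by auto
  have d2: "((\<lambda>t. hh lam k psi0 j r psi pr t) has_real_derivative g2 (psi, pp)) (at pp)"
    unfolding e2 using G assms by auto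
  show ?thesis using d1 d2 by blast
qed

lemma I_formula:
  assumes s: "sin (real lam * psi + psi0) \<noteq> 0"
  shows "(Iop lam (Fpot lam k psi0) ^^ n) (\<lambda>r \<psi> pr pp. Gfun lam psi0 \<psi>) r psi pr pp
       = (\<Sum>j\<le>n. real (n choose j) * pr^(n-j) * (1 / (real lam * r))^j * hh lam k psi0 j r psi pr pp)"
  using s
proof (induction n arbitrary: psi pp)
  case 0
  then show ?case by (simp add: hh_def)
next
  case (Suc n)
  let ?f = "(Iop lam (Fpot lam k psi0) ^^ n) (\<lambda>r \<psi> pr pp. Gfun lam psi0 \<psi>)"
  let ?a = "1 / (real lam * r)"
  let ?F = "Fpot lam k psi0"
  have "\<forall>j. \<exists>d1 d2. ((\<lambda>t. hh lam k psi0 j r t pr pp) has_real_derivative d1) (at psi) \<and>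
                 ((\<lambda>t. hh lam k psi0 j r psi pr t) has_real_derivative d2) (at pp)"
    using hh_D[OF Suc.prems] by blast
  then obtain D1 D2 where D: "\<And>j. ((\<lambda>t. hh lam k psi0 j r t pr pp) has_real_derivative D1 j) (at psi)"
     "\<And>j. ((\<lambda>t. hh lam k psi0 j r psi pr t) has_real_derivative D2 j) (at pp)"
    by metis
  have op: "open {t. sin (real lam * t + psi0) \<noteq> 0}"
    by (rule open_Collect_neq) (auto intro!: continuous_intros)
  have d1: "((\<lambda>t. ?f r t pr pp) has_real_derivative
      (\<Sum>j\<le>n. real (n choose j) * pr^(n-j) * ?a^j * D1 j)) (at psi)"
  proof (rule has_field_derivative_transform_within_open[OF _ op])
    show "((\<lambda>t. \<Sum>j\<le>n. real (n choose j) * pr^(n-j) * ?a^j * hh lam k psi0 j r t pr pp) has_real_derivative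
      (\<Sum>j\<le>n. real (n choose j) * pr^(n-j) * ?a^j * D1 j)) (at psi)"
      by (intro DERIV_sum DERIV_cmult D)
  qed (use Suc in auto)
  have e2: "(\<lambda>t. ?f r psi pr t) = (\<lambda>t. \<Sum>j\<le>n. real (n choose j) * pr^(n-j) * ?a^j * hh lam k psi0 j r psi pr t)"
    using Suc by auto
  have d2: "((\<lambda>t. ?f r psi pr t) has_real_derivative
      (\<Sum>j\<le>n. real (n choose j) * pr^(n-j) * ?a^j * D2 j)) (at pp)"
    unfolding e2 by (intro DERIV_sum DERIV_cmult D)
  have hs: "hh lam k psi0 (Suc j) r psi pr pp = pp * D1 j - deriv ?F psi * D2 j" for j
    by (simp only: hh_def funpow.simps o_apply) (rule XL_at[where f="hh lam k psi0 j", unfolded hh_def, OF D(1)[unfolded hh_def] D(2)[unfolded hh_def]])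
  have "XL ?F ?f r psi pr pp = pp * (\<Sum>j\<le>n. real (n choose j) * pr^(n-j) * ?a^j * D1 j) - deriv ?F psi * (\<Sum>j\<le>n. real (n choose j) * pr^(n-j) * ?a^j * D2 j)"
    by (rule XL_at[where f="?f", OF d1 d2])
  also have "\<dots> = (\<Sum>j\<le>n. real (n choose j) * pr^(n-j) * ?a^j * hh lam k psi0 (Suc j) r psi pr pp)"
    by (simp add: hs sum_distrib_left sum_subtractf[symmetric] algebra_simps)
  finally have X: "XL ?F ?f r psi pr pp = \<dots>" .
  have "(Iop lam ?F ^^ Suc n) (\<lambda>r \<psi> pr pp. Gfun lam psi0 \<psi>) r psi pr pp = pr * ?f r psi pr pp + ?a * XL ?F ?f r psi pr pp"
    by (simp add: Iop_def)
  also have "\<dots> = (\<Sum>j\<le>Suc n. real (Suc n choose j) * pr^(Suc n-j) * ?a^j * hh lam k psi0 j r psi pr pp)"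
    unfolding X Suc.IH[OF Suc.prems] by (rule pascal)
  finally show ?case .
qed

lemma hh1: "hh lam k psi0 1 r psi pr pp = - real lam * pp * sin (real lam * psi + psi0)"
proof -
  have d1: "((\<lambda>t. Gfun lam psi0 t) has_real_derivative (- sin (real lam * psi + psi0) * real lam)) (at psi)"
    unfolding Gfun_def by (auto intro!: derivative_eq_intros)
  have d2: "((\<lambda>t. Gfun lam psi0 psi) has_real_derivative 0) (at pp)"
    by (rule DERIV_const)
  show ?thesis
    unfolding hh_def using XL_at[where f="\<lambda>r \<psi> pr pp. Gfun lam psi0 \<psi>", OF d1 d2]
    by simp
qed

lemma deriv_a_pow:
  assumes "r \<noteq> 0" "lam > 0"
  shows "((\<lambda>s. (1 / (real lam * s))^j) has_real_derivative (- real j * (1 / (real lam * r))^j / r)) (at r)"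
proof -
  let ?y = "1 / (real lam * r)"
  have g: "((\<lambda>s. 1 / (real lam * s)) has_real_derivative (- (?y / r))) (at r)"
    using assms by (auto intro!: derivative_eq_intros simp: field_simps power2_eq_square)
  have f: "((\<lambda>y. y ^ j) has_real_derivative real j * ?y ^ (j - Suc 0)) (at ?y)"
    by (rule DERIV_pow)
  have "((\<lambda>s. (1 / (real lam * s))^j) has_real_derivative real j * ?y ^ (j - Suc 0) * (- (?y / r))) (at r)"
    by (rule DERIV_chain2[OF f g])
  moreover have "real j * ?y ^ (j - Suc 0) * (- (?y / r)) = - real j * ?y^j / r"
  proof (cases j)
    case (Suc m)
    then show ?thesis by (simp add: field_simps) (simp add: divide_simps)
  qed simp
  ultimately show ?thesis by simp
qed

lemma frechet_dir:
  fixes f :: "'a::real_normed_vector \<Rightarrow> real"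
  assumes "f differentiable (at x)" "((\<lambda>t. f (x + t *\<^sub>R v)) has_real_derivative d) (at 0)"
  shows "frechet_derivative f (at x) v = d"
proof -
  let ?D = "frechet_derivative f (at x)"
  have D: "(f has_derivative ?D) (at x)" using assms(1) frechet_derivative_works by blast
  have lin: "linear ?D" using D has_derivative_linear by blast
  have g: "((\<lambda>t::real. x + t *\<^sub>R v) has_derivative (\<lambda>t. t *\<^sub>R v)) (at 0)"
    by (auto intro!: derivative_eq_intros)
  have "((\<lambda>t. f (x + t *\<^sub>R v)) has_derivative (\<lambda>t. ?D (t *\<^sub>R v))) (at 0)"
    by (rule has_derivative_compose[OF g]) (simp add: D)
  moreover have "((\<lambda>t. f (x + t *\<^sub>R v)) has_derivative (\<lambda>t. t * d)) (at 0)"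
    using assms(2) by (simp add: has_field_derivative_def mult_commute_abs)
  ultimately have "(\<lambda>t. ?D (t *\<^sub>R v)) = (\<lambda>t. t * d)"
    by (rule has_derivative_unique)
  then have "?D (1 *\<^sub>R v) = 1 * d" by metis
  then show ?thesis by simp
qed

lemma KK_cont:
  assumes "g \<in> KK lam psi0" "sin (real lam * fst y + psi0) \<noteq> 0"
  shows "continuous (at y) g"
proof -
  obtain g1 g2 where "\<forall>x. sin (real lam * fst x + psi0) \<noteq> 0 \<longrightarrow> (g has_derivative (\<lambda>h. g1 x * fst h + g2 x * snd h)) (at x)"
    using KK_deriv[OF assms(1)] by blast
  then show ?thesis using assms(2) has_derivative_continuous by blast
qed

lemma KK_cont_comp:
  assumes "g \<in> KK lam psi0" "continuous (at x) f" "continuous (at x) h" "sin (real lam * f x + psi0) \<noteq> 0"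
  shows "continuous (at x) (\<lambda>x. g (f x, h x))"
proof -
  have "continuous (at x) (\<lambda>x. (f x, h x))" using assms(2,3) by (intro continuous_intros)
  moreover have "continuous (at ((\<lambda>x. (f x, h x)) x)) g" using KK_cont[OF assms(1)] assms(4) by simp
  ultimately show ?thesis using continuous_at_compose[of x "\<lambda>x. (f x, h x)" g] by (simp add: o_def)
qed

lemma Fpot_cont:
  assumes "continuous (at x) f" "sin (real lam * f x + psi0) \<noteq> 0"
  shows "continuous (at x) (\<lambda>x. Fpot lam k psi0 (f x))"
  unfolding Fpot_def using assms by (intro continuous_intros) auto

locale Tsetup =
  fixes lam :: nat and k psi0 :: real and gs :: "nat \<Rightarrow> real \<times> real \<Rightarrow> real"
  assumes lam_pos: "lam > 0" and gsK: "\<And>j. gs j \<in> KK lam psi0"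
    and gs_hh: "\<And>j r psi pr pp. sin (real lam * psi + psi0) \<noteq> 0 \<Longrightarrow> hh lam k psi0 j r psi pr pp = gs j (psi, pp)"
begin

definition Iv :: "real \<Rightarrow> real \<Rightarrow> real \<Rightarrow> real \<Rightarrow> real" where
  "Iv r psi pr pp = (\<Sum>j\<le>lam. real (lam choose j) * pr^(lam-j) * (1 / (real lam * r))^j * gs j (psi, pp))"

definition Ir :: "real \<Rightarrow> real \<Rightarrow> real \<Rightarrow> real \<Rightarrow> real" where
  "Ir r psi pr pp = (\<Sum>j\<le>lam. real (lam choose j) * pr^(lam-j) * (- real j * (1 / (real lam * r))^j / r) * gs j (psi, pp))"

definition Ipr :: "real \<Rightarrow> real \<Rightarrow> real \<Rightarrow> real \<Rightarrow> real" where
  "Ipr r psi pr pp = (\<Sum>j\<le>lam. real (lam choose j) * (real (lam - j) * pr^(lam - j - Suc 0)) * (1 / (real lam * r))^j * gs j (psi, pp))"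

definition Lf :: "real \<Rightarrow> real \<Rightarrow> real" where
  "Lf psi pp = pp\<^sup>2 / 2 + Fpot lam k psi0 psi"

definition Phi :: "real \<Rightarrow> real \<Rightarrow> real \<Rightarrow> real \<Rightarrow> real" where
  "Phi r psi pr pp = - 2 * Lf psi pp / r^3 * Ipr r psi pr pp - pr * Ir r psi pr pp"

definition Pp :: "real \<Rightarrow> real \<Rightarrow> real \<Rightarrow> real poly" where
  "Pp r psi pp = (\<Sum>j\<le>lam. monom (- 2 * Lf psi pp / r^3 * real (lam choose j) * real (lam - j) * (1 / (real lam * r))^j * gs j (psi, pp)) (lam - j - Suc 0)
      + monom (real (lam choose j) * real j * (1 / (real lam * r))^j * gs j (psi, pp) / r) (Suc (lam - j)))"

lemma I_eq:
  assumes "sin (real lam * psi + psi0) \<noteq> 0"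
  shows "Ilam lam k psi0 r psi pr pp = Iv r psi pr pp"
  unfolding Ilam_def Iv_def I_formula[OF assms] using gs_hh[OF assms] by simp

lemma dI_r:
  assumes "sin (real lam * psi + psi0) \<noteq> 0" "r \<noteq> 0"
  shows "((\<lambda>s. Ilam lam k psi0 s psi pr pp) has_real_derivative Ir r psi pr pp) (at r)"
proof -
  have e: "(\<lambda>s. Ilam lam k psi0 s psi pr pp) = (\<lambda>s. Iv s psi pr pp)"
    using I_eq[OF assms(1)] by auto
  show ?thesis
    unfolding e Iv_def Ir_def
    by (intro DERIV_sum DERIV_cmult_right DERIV_cmult deriv_a_pow assms(2) lam_pos)
qed

lemma dI_pr:
  assumes "sin (real lam * psi + psi0) \<noteq> 0"
  shows "((\<lambda>t. Ilam lam k psi0 r psi t pp) has_real_derivative Ipr r psi pr pp) (at pr)"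
proof -
  have e: "(\<lambda>t. Ilam lam k psi0 r psi t pp) = (\<lambda>t. Iv r psi t pp)"
    using I_eq[OF assms(1)] by auto
  show ?thesis
    unfolding e Iv_def Ipr_def
    by (intro DERIV_sum DERIV_cmult_right DERIV_cmult DERIV_pow)
qed

lemma Phi_poly: "poly (Pp r psi pp) pr = Phi r psi pr pp"
proof -
  have "Phi r psi pr pp = (\<Sum>j\<le>lam. - 2 * Lf psi pp / r^3 * (real (lam choose j) * (real (lam - j) * pr^(lam - j - Suc 0)) * (1 / (real lam * r))^j * gs j (psi, pp))
      - pr * (real (lam choose j) * pr^(lam-j) * (- real j * (1 / (real lam * r))^j / r) * gs j (psi, pp)))"
    by (simp only: Phi_def Ipr_def Ir_def sum_distrib_left sum_subtractf)
  also have "\<dots> = poly (Pp r psi pp) pr"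
    unfolding Pp_def poly_sum poly_add poly_monom
    by (rule sum.cong) (simp_all add: divide_inverse power_Suc algebra_simps)
  finally show ?thesis by simp
qed

lemma Pp_coeff: "coeff (Pp r psi pp) lam = real lam * (1 / (real lam * r)) * gs 1 (psi, pp) / r"
proof -
  have "coeff (Pp r psi pp) lam = (\<Sum>j\<le>lam. (if j = 1 then real (lam choose j) * real j * (1 / (real lam * r))^j * gs j (psi, pp) / r else 0))"
    unfolding Pp_def coeff_sum coeff_add coeff_monom
    by (rule sum.cong) (use lam_pos in auto)
  also have "\<dots> = real lam * (1 / (real lam * r)) * gs 1 (psi, pp) / r"
    using lam_pos by (simp add: sum.delta)
  finally show ?thesis .
qed

lemma Pp_nz:
  assumes "r \<noteq> 0" "sin (real lam * psi + psi0) \<noteq> 0" "pp \<noteq> 0"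
  shows "Pp r psi pp \<noteq> 0"
proof
  assume "Pp r psi pp = 0"
  then have "coeff (Pp r psi pp) lam = 0" by simp
  moreover have "gs 1 (psi, pp) = - real lam * pp * sin (real lam * psi + psi0)"
    using gs_hh[OF assms(2), of 1] hh1 by metis
  ultimately show False using assms lam_pos by (simp add: Pp_coeff)
qed

end

lemma differentiable_fst' [intro]: "f differentiable F \<Longrightarrow> (\<lambda>x. fst (f x)) differentiable F"
  unfolding differentiable_def using has_derivative_fst by blast
lemma differentiable_snd' [intro]: "f differentiable F \<Longrightarrow> (\<lambda>x. snd (f x)) differentiable F"
  unfolding differentiable_def using has_derivative_snd by blast

lemma KK_diff_comp:
  assumes "g \<in> KK lam psi0" "f differentiable (at x)" "h differentiable (at x)" "sin (real lam * f x + psi0) \<noteq> 0"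
  shows "(\<lambda>x. g (f x, h x)) differentiable (at x)"
proof -
  obtain g1 g2 where "\<forall>x. sin (real lam * fst x + psi0) \<noteq> 0 \<longrightarrow> (g has_derivative (\<lambda>h. g1 x * fst h + g2 x * snd h)) (at x)"
    using KK_deriv[OF assms(1)] by blast
  then have "g differentiable (at (f x, h x))" using assms(4) unfolding differentiable_def by auto
  moreover have "(\<lambda>x. (f x, h x)) differentiable (at x)"
    using assms(2,3) unfolding differentiable_def by (auto intro: has_derivative_Pair)
  ultimately show ?thesis using differentiable_compose[of g "\<lambda>x. (f x, h x)" x] by (simp add: o_def)
qed

lemma Fpot_diff:
  assumes "f differentiable (at x)" "sin (real lam * f x + psi0) \<noteq> 0"
  shows "(\<lambda>x. Fpot lam k psi0 (f x)) differentiable (at x)"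
proof -
  have "(\<lambda>x. Fk lam k psi0 (f x, 0)) differentiable (at x)"
    by (rule KK_diff_comp[OF Fk_KK assms(1) differentiable_const assms(2)])
  then show ?thesis by (simp add: Fpot_Fk[symmetric])
qed

lemma DERIV_at0: "(g has_real_derivative d) (at r) \<Longrightarrow> ((\<lambda>t. g (r + t)) has_real_derivative d) (at 0)"
  using DERIV_shift[of g d 0 r] by (simp add: add.commute)

lemma poly_avoid:
  fixes P :: "real poly"
  assumes "P \<noteq> 0" "d > 0"
  shows "\<exists>t. \<bar>t - a\<bar> < d \<and> t \<noteq> 0 \<and> poly P t \<noteq> 0"
proof -
  have "infinite ({a - d<..<a + d} - ({t. poly P t = 0} \<union> {0}))"
    using assms poly_roots_finite[OF assms(1)] by (intro Diff_infinite_finite infinite_Ioo) auto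
  then obtain t where "t \<in> {a - d<..<a + d} - ({t. poly P t = 0} \<union> {0})"
    using infinite_imp_nonempty by blast
  then show ?thesis by (intro exI[of _ t]) (auto simp: abs_less_iff)
qed

lemma dist4: "dist (r::real, psi::real, a::real, b::real) (r, psi, a', b') \<le> \<bar>a - a'\<bar> + \<bar>b - b'\<bar>"
  by (simp add: dist_Pair_Pair dist_real_def sqrt_sum_squares_le_sum_abs)

lemma dist6: "dist (r::real, psi::real, z::real, a::real, b::real, c::real) (r, psi, z, a', b', c') \<le> \<bar>a - a'\<bar> + \<bar>b - b'\<bar> + \<bar>c - c'\<bar>"
proof -
  have "sqrt ((a - a')\<^sup>2 + (sqrt ((b - b')\<^sup>2 + (c - c')\<^sup>2))\<^sup>2) \<le> \<bar>a - a'\<bar> + \<bar>sqrt ((b - b')\<^sup>2 + (c - c')\<^sup>2)\<bar>"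
    by (rule sqrt_sum_squares_le_sum_abs)
  also have "\<dots> \<le> \<bar>a - a'\<bar> + \<bar>b - b'\<bar> + \<bar>c - c'\<bar>"
    using sqrt_sum_squares_le_sum_abs[of "b - b'" "c - c'"] by simp
  finally show ?thesis by (simp add: dist_Pair_Pair dist_real_def)
qed

context Tsetup begin

lemma open_D: "open {x :: real \<times> real \<times> 'b::real_normed_vector. 0 < fst x \<and> sin (real lam * fst (snd x) + psi0) \<noteq> 0}"
proof -
  have "{x :: real \<times> real \<times> 'b. 0 < fst x \<and> sin (real lam * fst (snd x) + psi0) \<noteq> 0}
     = {x. 0 < fst x} \<inter> {x. sin (real lam * fst (snd x) + psi0) \<noteq> 0}" by auto
  moreover have "open {x :: real \<times> real \<times> 'b. 0 < fst x}"
    by (rule open_Collect_less) (auto intro!: continuous_intros)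
  moreover have "open {x :: real \<times> real \<times> 'b. sin (real lam * fst (snd x) + psi0) \<noteq> 0}"
    by (rule open_Collect_neq) (auto intro!: continuous_intros)
  ultimately show ?thesis by auto
qed

lemma fI_diff:
  assumes "r > 0" "sin (real lam * psi + psi0) \<noteq> 0"
  shows "(\<lambda>(r, \<psi>, pr, pp). Ilam lam k psi0 r \<psi> pr pp) differentiable (at (r, psi, pr, pp))"
proof -
  let ?J = "\<lambda>x::real\<times>real\<times>real\<times>real. Iv (fst x) (fst (snd x)) (fst (snd (snd x))) (snd (snd (snd x)))"
  have "?J differentiable (at (r, psi, pr, pp))"
    unfolding Iv_def
    using assms lam_pos
    by (auto intro!: differentiable_sum differentiable_mult differentiable_power differentiable_divide
        differentiable_const differentiable_ident differentiable_fst' differentiable_snd' KK_diff_comp[OF gsK])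
  then obtain D where D: "(?J has_derivative D) (at (r, psi, pr, pp))" unfolding differentiable_def by blast
  have "((\<lambda>(r, \<psi>, pr, pp). Ilam lam k psi0 r \<psi> pr pp) has_derivative D) (at (r, psi, pr, pp))"
    by (rule has_derivative_transform_within_open[OF D open_D]) (use assms in \<open>auto simp: I_eq\<close>)
  then show ?thesis unfolding differentiable_def by blast
qed

lemma fI6_diff:
  fixes z pz :: real
  assumes "r > 0" "sin (real lam * psi + psi0) \<noteq> 0"
  shows "(\<lambda>(r, \<psi>, z::real, pr, pp, pz::real). Ilam lam k psi0 r \<psi> pr pp) differentiable (at (r, psi, z, pr, pp, pz))"
proof -
  let ?J = "\<lambda>x::real\<times>real\<times>real\<times>real\<times>real\<times>real. Iv (fst x) (fst (snd x)) (fst (snd (snd (snd x)))) (fst (snd (snd (snd (snd x)))))"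
  have "?J differentiable (at (r, psi, z, pr, pp, pz))"
    unfolding Iv_def
    using assms lam_pos
    by (auto intro!: differentiable_sum differentiable_mult differentiable_power differentiable_divide
        differentiable_const differentiable_ident differentiable_fst' differentiable_snd' KK_diff_comp[OF gsK])
  then obtain D where D: "(?J has_derivative D) (at (r, psi, z, pr, pp, pz))" unfolding differentiable_def by blast
  have "((\<lambda>(r, \<psi>, z, pr, pp, pz). Ilam lam k psi0 r \<psi> pr pp) has_derivative D) (at (r, psi, z, pr, pp, pz))"
    by (rule has_derivative_transform_within_open[OF D open_D]) (use assms in \<open>auto simp: I_eq\<close>)
  then show ?thesis unfolding differentiable_def by blast
qed

end

context Tsetup begin

lemma part1_indep:
  assumes r: "r > 0" and s: "sin (real lam * psi + psi0) \<noteq> 0" and pp: "pp \<noteq> 0" and pr: "pr \<noteq> 0"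
    and Ph: "Phi r psi pr pp \<noteq> 0"
  shows "indep_differentials_at
      [(\<lambda>(r, \<psi>, pr, pp). 1/2 * pr\<^sup>2 + 1 / r\<^sup>2 * (1/2 * pp\<^sup>2 + Fpot lam k psi0 \<psi>)),
       (\<lambda>(r, \<psi>, pr, pp). 1/2 * pp\<^sup>2 + Fpot lam k psi0 \<psi>),
       (\<lambda>(r, \<psi>, pr, pp). Ilam lam k psi0 r \<psi> pr pp)] (r, psi, pr, pp)"
proof -
  let ?fH = "(\<lambda>(r, \<psi>, pr, pp). 1/2 * pr\<^sup>2 + 1 / r\<^sup>2 * (1/2 * pp\<^sup>2 + Fpot lam k psi0 \<psi>)) :: real\<times>real\<times>real\<times>real \<Rightarrow> real"
  let ?fL = "(\<lambda>(r, \<psi>, pr, pp). 1/2 * pp\<^sup>2 + Fpot lam k psi0 \<psi>) :: real\<times>real\<times>real\<times>real \<Rightarrow> real"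
  let ?fI = "(\<lambda>(r, \<psi>, pr, pp). Ilam lam k psi0 r \<psi> pr pp) :: real\<times>real\<times>real\<times>real \<Rightarrow> real"
  let ?x = "(r, psi, pr, pp)"
  have dH: "?fH differentiable (at ?x)"
    unfolding split_def using r s
    by (auto intro!: differentiable_add differentiable_mult differentiable_power differentiable_divide
        differentiable_const differentiable_ident differentiable_fst' differentiable_snd' Fpot_diff)
  have dL: "?fL differentiable (at ?x)"
    unfolding split_def using r s
    by (auto intro!: differentiable_add differentiable_mult differentiable_power differentiable_divide
        differentiable_const differentiable_ident differentiable_fst' differentiable_snd' Fpot_diff)
  have dI: "?fI differentiable (at ?x)" by (rule fI_diff[OF r s])
  have Hr: "frechet_derivative ?fH (at ?x) (1,0,0,0) = - 2 * Lf psi pp / r^3"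
    apply (rule frechet_dir[OF dH])
    apply simp
    using r by (auto intro!: derivative_eq_intros simp: Lf_def field_simps power2_eq_square power3_eq_cube)
  have Hpr: "frechet_derivative ?fH (at ?x) (0,0,1,0) = pr"
    apply (rule frechet_dir[OF dH])
    apply simp
    by (auto intro!: derivative_eq_intros simp: power2_eq_square)
  have Hpp: "frechet_derivative ?fH (at ?x) (0,0,0,1) = pp / r^2"
    apply (rule frechet_dir[OF dH])
    apply simp
    using r by (auto intro!: derivative_eq_intros simp: power2_eq_square)
  have Lr: "frechet_derivative ?fL (at ?x) (1,0,0,0) = 0"
    by (rule frechet_dir[OF dL]) (simp; auto intro!: derivative_eq_intros)
  have Lpr: "frechet_derivative ?fL (at ?x) (0,0,1,0) = 0"
    by (rule frechet_dir[OF dL]) (simp; auto intro!: derivative_eq_intros)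
  have Lpp: "frechet_derivative ?fL (at ?x) (0,0,0,1) = pp"
    apply (rule frechet_dir[OF dL])
    apply simp
    by (auto intro!: derivative_eq_intros simp: power2_eq_square)
  have Ir': "frechet_derivative ?fI (at ?x) (1,0,0,0) = Ir r psi pr pp"
    apply (rule frechet_dir[OF dI])
    apply simp
    using DERIV_at0[OF dI_r[OF s, of r pr pp]] r by simp
  have Ipr': "frechet_derivative ?fI (at ?x) (0,0,1,0) = Ipr r psi pr pp"
    apply (rule frechet_dir[OF dI])
    apply simp
    using DERIV_at0[OF dI_pr[OF s, where r=r and pr=pr and pp=pp]] by simp
  show ?thesis
    unfolding indep_differentials_at_def
  proof (intro conjI allI impI)
    show "\<forall>f\<in>set [?fH, ?fL, ?fI]. f differentiable at ?x" using dH dL dI by simp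
    fix c :: "nat \<Rightarrow> real"
    assume A: "\<forall>v. (\<Sum>i<length [?fH, ?fL, ?fI]. c i * frechet_derivative ([?fH, ?fL, ?fI] ! i) (at ?x) v) = 0"
    have A': "c 0 * frechet_derivative ?fH (at ?x) v + c 1 * frechet_derivative ?fL (at ?x) v + c 2 * frechet_derivative ?fI (at ?x) v = 0" for v
      using A[rule_format, of v] by (simp add: eval_nat_numeral)
    have e1: "c 0 * (- 2 * Lf psi pp / r^3) + c 2 * Ir r psi pr pp = 0" using A'[of "(1,0,0,0)"] Hr Lr Ir' by simp
    have e2: "c 0 * pr + c 2 * Ipr r psi pr pp = 0" using A'[of "(0,0,1,0)"] Hpr Lpr Ipr' by simp
    have "c 2 * Phi r psi pr pp = 0"
    proof -
      have "c 2 * Phi r psi pr pp = - 2 * Lf psi pp / r^3 * (c 2 * Ipr r psi pr pp) - pr * (c 2 * Ir r psi pr pp)"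
        by (simp add: Phi_def algebra_simps)
      also have "\<dots> = - 2 * Lf psi pp / r^3 * (- c 0 * pr) - pr * (c 0 * (2 * Lf psi pp / r^3))"
      proof -
        have a: "c 2 * Ipr r psi pr pp = - c 0 * pr" using e2 by (simp add: algebra_simps eq_neg_iff_add_eq_0)
        have b: "c 2 * Ir r psi pr pp = c 0 * (2 * Lf psi pp / r^3)" using e1 by (simp add: algebra_simps eq_neg_iff_add_eq_0)
        show ?thesis by (simp only: a b)
      qed
      also have "\<dots> = 0" by (simp add: algebra_simps)
      finally show ?thesis .
    qed
    then have c2: "c 2 = 0" using Ph by simp
    then have c0: "c 0 = 0" using e2 pr by simp
    obtain q where "frechet_derivative ?fI (at ?x) (0,0,0,1) = q" by blast
    then have "c 1 * pp = 0" using A'[of "(0,0,0,1)"] Hpp Lpp c0 c2 by simp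
    then have c1: "c 1 = 0" using pp by simp
    fix i assume "i < length [?fH, ?fL, ?fI]"
    then have "i = 0 \<or> i = 1 \<or> i = 2" by auto
    then show "c i = 0" using c0 c1 c2 by auto
  qed
qed

end

context Tsetup begin

lemma Phi_cont:
  assumes "0 < fst (f x)" "sin (real lam * fst (snd (f x)) + psi0) \<noteq> 0" "continuous (at x) f"
    and "continuous (at x) g" and "continuous (at x) h"
  shows "continuous (at x) (\<lambda>x. Phi (fst (f x)) (fst (snd (f x))) (g x) (h x))"
  unfolding Phi_def Ipr_def Ir_def Lf_def
  using assms lam_pos
  by (auto intro!: continuous_intros KK_cont_comp[OF gsK] Fpot_cont)

lemma part1:
  "functionally_independent
      [(\<lambda>(r, \<psi>, pr, pp). 1/2 * pr\<^sup>2 + 1 / r\<^sup>2 * (1/2 * pp\<^sup>2 + Fpot lam k psi0 \<psi>)),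
       (\<lambda>(r, \<psi>, pr, pp). 1/2 * pp\<^sup>2 + Fpot lam k psi0 \<psi>),
       (\<lambda>(r, \<psi>, pr, pp). Ilam lam k psi0 r \<psi> pr pp)]
      {x :: real \<times> real \<times> real \<times> real.
         fst x > 0 \<and> sin (real lam * fst (snd x) + psi0) \<noteq> 0}"
proof -
  define D where "D = {x :: real \<times> real \<times> real \<times> real. fst x > 0 \<and> sin (real lam * fst (snd x) + psi0) \<noteq> 0}"
  define Q where "Q = (\<lambda>x :: real \<times> real \<times> real \<times> real. snd (snd (snd x)) * fst (snd (snd x)) * Phi (fst x) (fst (snd x)) (fst (snd (snd x))) (snd (snd (snd x))))"
  define S where "S = {x \<in> D. Q x = 0}"
  have cont: "continuous_on D Q"
  proof (rule continuous_at_imp_continuous_on, rule ballI)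
    fix x assume "x \<in> D"
    then show "isCont Q x"
      unfolding Q_def D_def
      by (intro continuous_intros Phi_cont[where f="\<lambda>x. x"]) auto
  qed
  have "closedin (top_of_set D) S"
    unfolding S_def by (rule continuous_closedin_preimage_constant[OF cont])
  moreover have "interior S = {}"
  proof (rule ccontr)
    assume "interior S \<noteq> {}"
    then obtain y where "y \<in> interior S" by blast
    then obtain e where e: "e > 0" "ball y e \<subseteq> S" by (auto simp: mem_interior)
    obtain r psi pr pp where y: "y = (r, psi, pr, pp)" by (metis prod.collapse)
    have "y \<in> S" using e centre_in_ball by blast
    then have "y \<in> D" by (simp add: S_def)
    then have r: "r > 0" and s: "sin (real lam * psi + psi0) \<noteq> 0" by (auto simp: D_def y)
    define pp' where "pp' = (if pp \<noteq> 0 then pp else e/4)"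
    have pp': "pp' \<noteq> 0" "\<bar>pp - pp'\<bar> < e/2" using e by (auto simp: pp'_def)
    obtain pr' where pr': "\<bar>pr' - pr\<bar> < e/2" "pr' \<noteq> 0" "poly (Pp r psi pp') pr' \<noteq> 0"
      using poly_avoid[OF Pp_nz[of r psi pp'], of "e/2" pr] r s pp' e by auto
    let ?z = "(r, psi, pr', pp')"
    have "dist y ?z \<le> \<bar>pr - pr'\<bar> + \<bar>pp - pp'\<bar>" unfolding y by (rule dist4)
    also have "\<dots> < e" using pr' pp' by linarith
    finally have "?z \<in> ball y e" by (simp add: dist_commute)
    then have "?z \<in> S" using e by blast
    then have "Q ?z = 0" by (simp add: S_def)
    then show False using pp' pr' by (simp add: Q_def Phi_poly)
  qed
  moreover have "\<forall>x\<in>D - S. indep_differentials_at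
      [(\<lambda>(r, \<psi>, pr, pp). 1/2 * pr\<^sup>2 + 1 / r\<^sup>2 * (1/2 * pp\<^sup>2 + Fpot lam k psi0 \<psi>)),
       (\<lambda>(r, \<psi>, pr, pp). 1/2 * pp\<^sup>2 + Fpot lam k psi0 \<psi>),
       (\<lambda>(r, \<psi>, pr, pp). Ilam lam k psi0 r \<psi> pr pp)] x"
  proof
    fix x assume "x \<in> D - S"
    moreover obtain r psi pr pp where x: "x = (r, psi, pr, pp)" by (metis prod.collapse)
    ultimately show "indep_differentials_at
      [(\<lambda>(r, \<psi>, pr, pp). 1/2 * pr\<^sup>2 + 1 / r\<^sup>2 * (1/2 * pp\<^sup>2 + Fpot lam k psi0 \<psi>)),
       (\<lambda>(r, \<psi>, pr, pp). 1/2 * pp\<^sup>2 + Fpot lam k psi0 \<psi>),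
       (\<lambda>(r, \<psi>, pr, pp). Ilam lam k psi0 r \<psi> pr pp)] x"
      unfolding x by (intro part1_indep) (auto simp: S_def D_def Q_def)
  qed
  ultimately show ?thesis
    unfolding functionally_independent_def D_def[symmetric]
    by (intro exI[of _ S]) (auto simp: S_def)
qed

end

context Tsetup begin

definition Ef :: "real \<Rightarrow> real \<Rightarrow> real \<Rightarrow> real \<Rightarrow> real \<Rightarrow> real \<Rightarrow> real" where
  "Ef r psi z pr pp pz = - (r * pz - z * pr) * pr + 2 * z * Lf psi pp / r^2"

lemma part2_indep:
  assumes r: "r > 0" and s: "sin (real lam * psi + psi0) \<noteq> 0" and pp: "pp \<noteq> 0" and pr: "pr \<noteq> 0"
    and pz: "pz \<noteq> 0" and Ph: "Phi r psi pr pp \<noteq> 0" and E: "Ef r psi z pr pp pz \<noteq> 0"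
  shows "indep_differentials_at
      [(\<lambda>(r, \<psi>, z, pr, pp, pz). 1/2 * (pr\<^sup>2 + 1 / r\<^sup>2 * pp\<^sup>2 + pz\<^sup>2) + Fpot lam k psi0 \<psi> / r\<^sup>2),
       (\<lambda>(r, \<psi>, z, pr, pp, pz). 1/2 * pz\<^sup>2),
       (\<lambda>(r, \<psi>, z, pr, pp, pz). 1/2 * pp\<^sup>2 + Fpot lam k psi0 \<psi>),
       (\<lambda>(r, \<psi>, z, pr, pp, pz). 1/2 * ((r * pz - z * pr)\<^sup>2 + (1 + z\<^sup>2 / r\<^sup>2) * pp\<^sup>2)
                                     + (1 + z\<^sup>2 / r\<^sup>2) * Fpot lam k psi0 \<psi>),
       (\<lambda>(r, \<psi>, z, pr, pp, pz). Ilam lam k psi0 r \<psi> pr pp)] (r, psi, z, pr, pp, pz)"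
proof -
  let ?g0 = "(\<lambda>(r, \<psi>, z, pr, pp, pz). 1/2 * (pr\<^sup>2 + 1 / r\<^sup>2 * pp\<^sup>2 + pz\<^sup>2) + Fpot lam k psi0 \<psi> / r\<^sup>2) :: real\<times>real\<times>real\<times>real\<times>real\<times>real \<Rightarrow> real"
  let ?g1 = "(\<lambda>(r, \<psi>, z, pr, pp, pz). 1/2 * pz\<^sup>2) :: real\<times>real\<times>real\<times>real\<times>real\<times>real \<Rightarrow> real"
  let ?g2 = "(\<lambda>(r, \<psi>, z, pr, pp, pz). 1/2 * pp\<^sup>2 + Fpot lam k psi0 \<psi>) :: real\<times>real\<times>real\<times>real\<times>real\<times>real \<Rightarrow> real"
  let ?g3 = "(\<lambda>(r, \<psi>, z, pr, pp, pz). 1/2 * ((r * pz - z * pr)\<^sup>2 + (1 + z\<^sup>2 / r\<^sup>2) * pp\<^sup>2)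
                                     + (1 + z\<^sup>2 / r\<^sup>2) * Fpot lam k psi0 \<psi>) :: real\<times>real\<times>real\<times>real\<times>real\<times>real \<Rightarrow> real"
  let ?g4 = "(\<lambda>(r, \<psi>, z, pr, pp, pz). Ilam lam k psi0 r \<psi> pr pp) :: real\<times>real\<times>real\<times>real\<times>real\<times>real \<Rightarrow> real"
  let ?x = "(r, psi, z, pr, pp, pz)"
  have d0: "?g0 differentiable (at ?x)"
    unfolding split_def using r s
    by (auto intro!: differentiable_add differentiable_mult differentiable_power differentiable_divide differentiable_diff
        differentiable_const differentiable_ident differentiable_fst' differentiable_snd' Fpot_diff)
  have d1: "?g1 differentiable (at ?x)"
    unfolding split_def using r s
    by (auto intro!: differentiable_add differentiable_mult differentiable_power differentiable_divide differentiable_diff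
        differentiable_const differentiable_ident differentiable_fst' differentiable_snd' Fpot_diff)
  have d2: "?g2 differentiable (at ?x)"
    unfolding split_def using r s
    by (auto intro!: differentiable_add differentiable_mult differentiable_power differentiable_divide differentiable_diff
        differentiable_const differentiable_ident differentiable_fst' differentiable_snd' Fpot_diff)
  have d3: "?g3 differentiable (at ?x)"
    unfolding split_def using r s
    by (auto intro!: differentiable_add differentiable_mult differentiable_power differentiable_divide differentiable_diff
        differentiable_const differentiable_ident differentiable_fst' differentiable_snd' Fpot_diff)
  have d4: "?g4 differentiable (at ?x)" by (rule fI6_diff[OF r s])
  have z0: "frechet_derivative ?g0 (at ?x) (0,0,1,0,0,0) = 0"
    by (rule frechet_dir[OF d0]) (simp; auto intro!: derivative_eq_intros)
  have r0: "frechet_derivative ?g0 (at ?x) (1,0,0,0,0,0) = - 2 * Lf psi pp / r^3"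
    by (rule frechet_dir[OF d0]) (simp; use r in \<open>auto intro!: derivative_eq_intros simp: Lf_def field_simps power2_eq_square power3_eq_cube\<close>)
  have pr0: "frechet_derivative ?g0 (at ?x) (0,0,0,1,0,0) = pr"
    by (rule frechet_dir[OF d0]) (simp; auto intro!: derivative_eq_intros simp: power2_eq_square)
  have pz0: "frechet_derivative ?g0 (at ?x) (0,0,0,0,0,1) = pz"
    by (rule frechet_dir[OF d0]) (simp; auto intro!: derivative_eq_intros simp: power2_eq_square)
  have pp0: "frechet_derivative ?g0 (at ?x) (0,0,0,0,1,0) = pp / r^2"
    by (rule frechet_dir[OF d0]) (simp; use r in \<open>auto intro!: derivative_eq_intros simp: power2_eq_square\<close>)
  have z1: "frechet_derivative ?g1 (at ?x) (0,0,1,0,0,0) = 0"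
    by (rule frechet_dir[OF d1]) (simp; auto intro!: derivative_eq_intros)
  have r1: "frechet_derivative ?g1 (at ?x) (1,0,0,0,0,0) = 0"
    by (rule frechet_dir[OF d1]) (simp; auto intro!: derivative_eq_intros)
  have pr1: "frechet_derivative ?g1 (at ?x) (0,0,0,1,0,0) = 0"
    by (rule frechet_dir[OF d1]) (simp; auto intro!: derivative_eq_intros)
  have pz1: "frechet_derivative ?g1 (at ?x) (0,0,0,0,0,1) = pz"
    by (rule frechet_dir[OF d1]) (simp; auto intro!: derivative_eq_intros simp: power2_eq_square)
  have pp1: "frechet_derivative ?g1 (at ?x) (0,0,0,0,1,0) = 0"
    by (rule frechet_dir[OF d1]) (simp; auto intro!: derivative_eq_intros)
  have z2: "frechet_derivative ?g2 (at ?x) (0,0,1,0,0,0) = 0"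
    by (rule frechet_dir[OF d2]) (simp; auto intro!: derivative_eq_intros)
  have r2: "frechet_derivative ?g2 (at ?x) (1,0,0,0,0,0) = 0"
    by (rule frechet_dir[OF d2]) (simp; auto intro!: derivative_eq_intros)
  have pr2: "frechet_derivative ?g2 (at ?x) (0,0,0,1,0,0) = 0"
    by (rule frechet_dir[OF d2]) (simp; auto intro!: derivative_eq_intros)
  have pz2: "frechet_derivative ?g2 (at ?x) (0,0,0,0,0,1) = 0"
    by (rule frechet_dir[OF d2]) (simp; auto intro!: derivative_eq_intros)
  have pp2: "frechet_derivative ?g2 (at ?x) (0,0,0,0,1,0) = pp"
    by (rule frechet_dir[OF d2]) (simp; auto intro!: derivative_eq_intros simp: power2_eq_square)
  have z3: "frechet_derivative ?g3 (at ?x) (0,0,1,0,0,0) = Ef r psi z pr pp pz"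
    by (rule frechet_dir[OF d3]) (simp; use r in \<open>auto intro!: derivative_eq_intros simp: Ef_def Lf_def field_simps power2_eq_square\<close>)
  have z4: "frechet_derivative ?g4 (at ?x) (0,0,1,0,0,0) = 0"
    by (rule frechet_dir[OF d4]) (simp; auto intro!: derivative_eq_intros)
  have pz4: "frechet_derivative ?g4 (at ?x) (0,0,0,0,0,1) = 0"
    by (rule frechet_dir[OF d4]) (simp; auto intro!: derivative_eq_intros)
  have r4: "frechet_derivative ?g4 (at ?x) (1,0,0,0,0,0) = Ir r psi pr pp"
    apply (rule frechet_dir[OF d4])
    apply simp
    using DERIV_at0[OF dI_r[OF s, where r=r and pr=pr and pp=pp]] r by simp
  have pr4: "frechet_derivative ?g4 (at ?x) (0,0,0,1,0,0) = Ipr r psi pr pp"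
    apply (rule frechet_dir[OF d4])
    apply simp
    using DERIV_at0[OF dI_pr[OF s, where r=r and pr=pr and pp=pp]] by simp
  show ?thesis
    unfolding indep_differentials_at_def
  proof (intro conjI allI impI)
    show "\<forall>f\<in>set [?g0, ?g1, ?g2, ?g3, ?g4]. f differentiable at ?x" using d0 d1 d2 d3 d4 by simp
    fix c :: "nat \<Rightarrow> real"
    assume A: "\<forall>v. (\<Sum>i<length [?g0, ?g1, ?g2, ?g3, ?g4]. c i * frechet_derivative ([?g0, ?g1, ?g2, ?g3, ?g4] ! i) (at ?x) v) = 0"
    have A': "c 0 * frechet_derivative ?g0 (at ?x) v + c 1 * frechet_derivative ?g1 (at ?x) v
       + c 2 * frechet_derivative ?g2 (at ?x) v + c 3 * frechet_derivative ?g3 (at ?x) v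
       + c 4 * frechet_derivative ?g4 (at ?x) v = 0" for v
      using A[rule_format, of v] by (simp add: eval_nat_numeral)
    have "c 3 * Ef r psi z pr pp pz = 0" using A'[of "(0,0,1,0,0,0)"] z0 z1 z2 z3 z4 by simp
    then have c3: "c 3 = 0" using E by simp
    have e1: "c 0 * (- 2 * Lf psi pp / r^3) + c 4 * Ir r psi pr pp = 0" using A'[of "(1,0,0,0,0,0)"] r0 r1 r2 r4 c3 by simp
    have e2: "c 0 * pr + c 4 * Ipr r psi pr pp = 0" using A'[of "(0,0,0,1,0,0)"] pr0 pr1 pr2 pr4 c3 by simp
    have "c 4 * Phi r psi pr pp = 0"
    proof -
      have "c 4 * Phi r psi pr pp = - 2 * Lf psi pp / r^3 * (c 4 * Ipr r psi pr pp) - pr * (c 4 * Ir r psi pr pp)"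
        by (simp add: Phi_def algebra_simps)
      also have "\<dots> = - 2 * Lf psi pp / r^3 * (- c 0 * pr) - pr * (c 0 * (2 * Lf psi pp / r^3))"
      proof -
        have a: "c 4 * Ipr r psi pr pp = - c 0 * pr" using e2 by (simp add: algebra_simps eq_neg_iff_add_eq_0)
        have b: "c 4 * Ir r psi pr pp = c 0 * (2 * Lf psi pp / r^3)" using e1 by (simp add: algebra_simps eq_neg_iff_add_eq_0)
        show ?thesis by (simp only: a b)
      qed
      also have "\<dots> = 0" by (simp add: algebra_simps)
      finally show ?thesis .
    qed
    then have c4: "c 4 = 0" using Ph by simp
    then have c0: "c 0 = 0" using e2 pr by simp
    have "c 1 * pz = 0" using A'[of "(0,0,0,0,0,1)"] pz0 pz1 pz2 pz4 c0 c3 c4 by simp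
    then have c1: "c 1 = 0" using pz by simp
    have "c 2 * pp = 0" using A'[of "(0,0,0,0,1,0)"] pp0 pp1 pp2 c0 c1 c3 c4 by simp
    then have c2: "c 2 = 0" using pp by simp
    fix i assume "i < length [?g0, ?g1, ?g2, ?g3, ?g4]"
    then have "i = 0 \<or> i = 1 \<or> i = 2 \<or> i = 3 \<or> i = 4" by auto
    then show "c i = 0" using c0 c1 c2 c3 c4 by auto
  qed
qed

end

context Tsetup begin

lemma part2:
  "functionally_independent
      [(\<lambda>(r, \<psi>, z, pr, pp, pz). 1/2 * (pr\<^sup>2 + 1 / r\<^sup>2 * pp\<^sup>2 + pz\<^sup>2) + Fpot lam k psi0 \<psi> / r\<^sup>2),
       (\<lambda>(r, \<psi>, z, pr, pp, pz). 1/2 * pz\<^sup>2),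
       (\<lambda>(r, \<psi>, z, pr, pp, pz). 1/2 * pp\<^sup>2 + Fpot lam k psi0 \<psi>),
       (\<lambda>(r, \<psi>, z, pr, pp, pz). 1/2 * ((r * pz - z * pr)\<^sup>2 + (1 + z\<^sup>2 / r\<^sup>2) * pp\<^sup>2)
                                     + (1 + z\<^sup>2 / r\<^sup>2) * Fpot lam k psi0 \<psi>),
       (\<lambda>(r, \<psi>, z, pr, pp, pz). Ilam lam k psi0 r \<psi> pr pp)]
      {x :: real \<times> real \<times> real \<times> real \<times> real \<times> real.
         fst x > 0 \<and> sin (real lam * fst (snd x) + psi0) \<noteq> 0}"
proof -
  define D where "D = {x :: real \<times> real \<times> real \<times> real \<times> real \<times> real. fst x > 0 \<and> sin (real lam * fst (snd x) + psi0) \<noteq> 0}"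
  define Q where "Q = (\<lambda>x :: real \<times> real \<times> real \<times> real \<times> real \<times> real.
     case x of (r, psi, z, pr, pp, pz) \<Rightarrow> pp * pr * pz * Phi r psi pr pp * Ef r psi z pr pp pz)"
  define S where "S = {x \<in> D. Q x = 0}"
  have cont: "continuous_on D Q"
  proof (rule continuous_at_imp_continuous_on, rule ballI)
    fix x assume "x \<in> D"
    then show "isCont Q x"
      unfolding Q_def D_def split_def Ef_def Lf_def
      by (intro continuous_intros Phi_cont[where f="\<lambda>x. x"] Fpot_cont) auto
  qed
  have "closedin (top_of_set D) S"
    unfolding S_def by (rule continuous_closedin_preimage_constant[OF cont])
  moreover have "interior S = {}"
  proof (rule ccontr)
    assume "interior S \<noteq> {}"
    then obtain y where "y \<in> interior S" by blast
    then obtain e where e: "e > 0" "ball y e \<subseteq> S" by (auto simp: mem_interior)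
    obtain r psi z pr pp pz where y: "y = (r, psi, z, pr, pp, pz)" by (metis prod.collapse)
    have "y \<in> S" using e centre_in_ball by blast
    then have "y \<in> D" by (simp add: S_def)
    then have r: "r > 0" and s: "sin (real lam * psi + psi0) \<noteq> 0" by (auto simp: D_def y)
    define pp' where "pp' = (if pp \<noteq> 0 then pp else e/4)"
    have pp': "pp' \<noteq> 0" "\<bar>pp - pp'\<bar> < e/3" using e by (auto simp: pp'_def)
    obtain pr' where pr': "\<bar>pr' - pr\<bar> < e/3" "pr' \<noteq> 0" "poly (Pp r psi pp') pr' \<noteq> 0"
      using poly_avoid[OF Pp_nz[of r psi pp'], of "e/3" pr] r s pp' e by auto
    have nz: "[: z * pr'^2 + 2 * z * Lf psi pp' / r^2, - (r * pr') :] \<noteq> 0" using r pr' by simp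
    obtain pz' where pz': "\<bar>pz' - pz\<bar> < e/3" "pz' \<noteq> 0" "poly [: z * pr'^2 + 2 * z * Lf psi pp' / r^2, - (r * pr') :] pz' \<noteq> 0"
      using poly_avoid[OF nz, of "e/3" pz] e by auto
    have Ez: "Ef r psi z pr' pp' pz' \<noteq> 0"
      using pz'(3) by (simp add: Ef_def algebra_simps power2_eq_square)
    let ?z = "(r, psi, z, pr', pp', pz')"
    have "dist y ?z \<le> \<bar>pr - pr'\<bar> + \<bar>pp - pp'\<bar> + \<bar>pz - pz'\<bar>" unfolding y by (rule dist6)
    also have "\<dots> < e" using pr' pp' pz' by linarith
    finally have "?z \<in> ball y e" by (simp add: dist_commute)
    then have "?z \<in> S" using e by blast
    then have "Q ?z = 0" by (simp add: S_def)
    then show False using pp' pr' pz' Ez by (simp add: Q_def Phi_poly)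
  qed
  moreover have "\<forall>x\<in>D - S. indep_differentials_at
      [(\<lambda>(r, \<psi>, z, pr, pp, pz). 1/2 * (pr\<^sup>2 + 1 / r\<^sup>2 * pp\<^sup>2 + pz\<^sup>2) + Fpot lam k psi0 \<psi> / r\<^sup>2),
       (\<lambda>(r, \<psi>, z, pr, pp, pz). 1/2 * pz\<^sup>2),
       (\<lambda>(r, \<psi>, z, pr, pp, pz). 1/2 * pp\<^sup>2 + Fpot lam k psi0 \<psi>),
       (\<lambda>(r, \<psi>, z, pr, pp, pz). 1/2 * ((r * pz - z * pr)\<^sup>2 + (1 + z\<^sup>2 / r\<^sup>2) * pp\<^sup>2)
                                     + (1 + z\<^sup>2 / r\<^sup>2) * Fpot lam k psi0 \<psi>),
       (\<lambda>(r, \<psi>, z, pr, pp, pz). Ilam lam k psi0 r \<psi> pr pp)] x"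
  proof
    fix x assume "x \<in> D - S"
    moreover obtain r psi z pr pp pz where x: "x = (r, psi, z, pr, pp, pz)" by (metis prod.collapse)
    ultimately show "indep_differentials_at
      [(\<lambda>(r, \<psi>, z, pr, pp, pz). 1/2 * (pr\<^sup>2 + 1 / r\<^sup>2 * pp\<^sup>2 + pz\<^sup>2) + Fpot lam k psi0 \<psi> / r\<^sup>2),
       (\<lambda>(r, \<psi>, z, pr, pp, pz). 1/2 * pz\<^sup>2),
       (\<lambda>(r, \<psi>, z, pr, pp, pz). 1/2 * pp\<^sup>2 + Fpot lam k psi0 \<psi>),
       (\<lambda>(r, \<psi>, z, pr, pp, pz). 1/2 * ((r * pz - z * pr)\<^sup>2 + (1 + z\<^sup>2 / r\<^sup>2) * pp\<^sup>2)
                                     + (1 + z\<^sup>2 / r\<^sup>2) * Fpot lam k psi0 \<psi>),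
       (\<lambda>(r, \<psi>, z, pr, pp, pz). Ilam lam k psi0 r \<psi> pr pp)] x"
      unfolding x by (intro part2_indep) (auto simp: S_def D_def Q_def)
  qed
  ultimately show ?thesis
    unfolding functionally_independent_def D_def[symmetric]
    by (intro exI[of _ S]) (auto simp: S_def)
qed

end

theorem theorem2:
  fixes lam :: nat and k psi0 :: real
  assumes "lam > 0" and "k \<noteq> 0"
  defines "F \<equiv> Fpot lam k psi0"
      and "I \<equiv> Ilam lam k psi0"
  shows
   "functionally_independent
      [(\<lambda>(r, \<psi>, pr, pp). 1/2 * pr\<^sup>2 + 1 / r\<^sup>2 * (1/2 * pp\<^sup>2 + F \<psi>)),
       (\<lambda>(r, \<psi>, pr, pp). 1/2 * pp\<^sup>2 + F \<psi>),
       (\<lambda>(r, \<psi>, pr, pp). I r \<psi> pr pp)]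
      {x :: real \<times> real \<times> real \<times> real.
         fst x > 0 \<and> sin (real lam * fst (snd x) + psi0) \<noteq> 0}
    \<and>
    functionally_independent
      [(\<lambda>(r, \<psi>, z, pr, pp, pz). 1/2 * (pr\<^sup>2 + 1 / r\<^sup>2 * pp\<^sup>2 + pz\<^sup>2) + F \<psi> / r\<^sup>2),
       (\<lambda>(r, \<psi>, z, pr, pp, pz). 1/2 * pz\<^sup>2),
       (\<lambda>(r, \<psi>, z, pr, pp, pz). 1/2 * pp\<^sup>2 + F \<psi>),
       (\<lambda>(r, \<psi>, z, pr, pp, pz). 1/2 * ((r * pz - z * pr)\<^sup>2 + (1 + z\<^sup>2 / r\<^sup>2) * pp\<^sup>2)
                                     + (1 + z\<^sup>2 / r\<^sup>2) * F \<psi>),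
       (\<lambda>(r, \<psi>, z, pr, pp, pz). I r \<psi> pr pp)]
      {x :: real \<times> real \<times> real \<times> real \<times> real \<times> real.
         fst x > 0 \<and> sin (real lam * fst (snd x) + psi0) \<noteq> 0}"
proof -
  have "\<forall>j. \<exists>g. g \<in> KK lam psi0 \<and> (\<forall>r psi pr pp. sin (real lam * psi + psi0) \<noteq> 0 \<longrightarrow> hh lam k psi0 j r psi pr pp = g (psi, pp))"
    using hh_K by blast
  then obtain gs where gs: "\<And>j. gs j \<in> KK lam psi0"
    "\<And>j r psi pr pp. sin (real lam * psi + psi0) \<noteq> 0 \<Longrightarrow> hh lam k psi0 j r psi pr pp = gs j (psi, pp)"
    by metis
  interpret T: Tsetup lam k psi0 gs
    using assms(1) gs by unfold_locales auto
  show ?thesis unfolding F_def I_def using T.part1 T.part2 by blast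
qed

end
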